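(* Consider the closed-loop system $$\dot X(t)=f\big(X(t),u(0,t)\big),\quad u_t(x,t)=v\big(u(x,t)\big)u_x(x,t),\quad u(1,t)=\kappa\big(p(1,t)\big),$$ with $p(x,t)=X(t)+\int_0^x f(p(y,t),u(y,t))\Gamma(u(y,t),u_y(y,t),y)\,dy$, $\Gamma(u,u_x,x)=\frac{1}{v(u)}-\frac{x v'(u)u_x}{v(u)^2}$, under Assumptions (A1)–(A3) below, and let $M>0$ be fixed. There exists a class $\mathcal{K}_\infty$ function $\rho_1$ such that for all solutions of the closed-loop system satisfying $$-M<\frac{v'\big(u(x,t)\big)u_x(x,t)}{v\big(u(x,t)\big)}<1\quad\text{for all }x\in[0,1],\ t\ge0,$$ the following holds: $$\|p(t)\|_\infty+\|p_x(t)\|_\infty\le\rho_1\big(|X(t)|+\|u(t)\|_\infty\big)\quad\text{for all }t\ge0.$$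
   Context: $X(t)\in\mathbb{R}^n$, $u(x,t)\in\mathbb{R}$, $x\in[0,1]$, $t\ge0$; $f:\mathbb{R}^n\times\mathbb{R}\to\mathbb{R}^n$ is continuously differentiable with $f(0,0)=0$. (A1) $v:\mathbb{R}\to\mathbb{R}_+$ is twice continuously differentiable and $v(u)\ge\underline v>0$ for all $u$. (A2) $\dot X=f(X,\omega)$ is strongly forward complete w.r.t. $\omega$: there exist smooth $R:\mathbb{R}^n\to\mathbb{R}_+$ and class $\mathcal{K}_\infty$ functions $\alpha_1,\alpha_2,\alpha_3$ with $\alpha_1(|X|)\le R(X)\le\alpha_2(|X|)$, $\frac{\partial R}{\partial X}f(X,\omega)\le R(X)+\alpha_3(|\omega|)$. (A3) $\kappa:\mathbb{R}^n\to\mathbb{R}$ is twice continuously differentiable, $\kappa(0)=0$, and $\dot X=f(X,\kappa(X)+\omega)$ is input-to-state stable w.r.t. $\omega$. Solutions are continuously differentiable functions $X$, $u$ satisfying the closed-loop equations. For vector-valued $p$, $\|p(t)\|_\infty=\max_{x\in[0,1]}|p(x,t)|$ and $\|p_x(t)\|_\infty=\max_{x\in[0,1]}|p_x(x,t)|$ with $|\cdot|$ Euclidean; $\|u(t)\|_\infty=\max_{x\in[0,1]}|u(x,t)|$. *)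

theory Defs
  imports "HOL-Analysis.Analysis"
begin

definition C1_fun :: "('a::real_normed_vector \<Rightarrow> 'b::real_normed_vector) \<Rightarrow> bool" where
  "C1_fun g \<longleftrightarrow> (\<exists>g'. (\<forall>x. (g has_derivative blinfun_apply (g' x)) (at x)) \<and> continuous_on UNIV g')"

definition C2_fun :: "('a::real_normed_vector \<Rightarrow> 'b::real_normed_vector) \<Rightarrow> bool" where
  "C2_fun g \<longleftrightarrow> (\<exists>g'. (\<forall>x. (g has_derivative blinfun_apply (g' x)) (at x)) \<and> C1_fun g')"

text \<open>Smooth (C-infinity) real-valued functions: all iterated directional derivatives exist.\<close>
definition smooth_fun :: "('a::real_normed_vector \<Rightarrow> real) \<Rightarrow> bool" where
  "smooth_fun g \<longleftrightarrow> (\<exists>S. g \<in> S \<and>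
     (\<forall>h\<in>S. \<exists>Dh. (\<forall>x. (h has_derivative Dh x) (at x)) \<and> (\<forall>e. (\<lambda>x. Dh x e) \<in> S)))"

definition class_K :: "(real \<Rightarrow> real) \<Rightarrow> bool" where
  "class_K \<alpha> \<longleftrightarrow> continuous_on {0..} \<alpha> \<and> \<alpha> 0 = 0 \<and> strict_mono_on {0..} \<alpha>"

definition class_Kinf :: "(real \<Rightarrow> real) \<Rightarrow> bool" where
  "class_Kinf \<alpha> \<longleftrightarrow> class_K \<alpha> \<and> filterlim \<alpha> at_top at_top"

definition class_KL :: "(real \<Rightarrow> real \<Rightarrow> real) \<Rightarrow> bool" where
  "class_KL \<beta> \<longleftrightarrow> (\<forall>t\<ge>0. class_K (\<lambda>r. \<beta> r t)) \<and>
     (\<forall>r\<ge>0. (\<forall>s t. 0 \<le> s \<longrightarrow> s \<le> t \<longrightarrow> \<beta> r t \<le> \<beta> r s) \<and> ((\<lambda>t. \<beta> r t) \<longlongrightarrow> 0) at_top)"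

text \<open>Input-to-state stability of \<open>X' = F X \<omega>\<close> w.r.t. measurable, locally essentially
  bounded inputs; (Caratheodory) solutions on \<open>[0,T)\<close> are continuous functions satisfying the
  integral equation. The essential sup norm of \<omega> on [0,t] enters via all its upper bounds c.\<close>
definition ISS :: "('a::euclidean_space \<Rightarrow> real \<Rightarrow> 'a) \<Rightarrow> bool" where
  "ISS F \<longleftrightarrow> (\<exists>\<beta> \<gamma>. class_KL \<beta> \<and> class_K \<gamma> \<and>
     (\<forall>\<omega> X T. \<omega> \<in> borel_measurable lborel \<and>
        (\<forall>S. \<exists>B. AE s in lborel. s \<in> {0..S} \<longrightarrow> \<bar>\<omega> s\<bar> \<le> B) \<and>
        0 < T \<and> continuous_on {0..<T} X \<and>
        (\<forall>t\<in>{0..<T}. ((\<lambda>s. F (X s) (\<omega> s)) has_integral (X t - X 0)) {0..t})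
      \<longrightarrow> (\<forall>t\<in>{0..<T}. \<forall>c\<ge>0. (AE s in lborel. s \<in> {0..t} \<longrightarrow> \<bar>\<omega> s\<bar> \<le> c) \<longrightarrow>
             norm (X t) \<le> \<beta> (norm (X 0)) t + \<gamma> c)))"

definition Gamma :: "(real \<Rightarrow> real) \<Rightarrow> real \<Rightarrow> real \<Rightarrow> real \<Rightarrow> real" where
  "Gamma v u ux x = 1 / v u - x * deriv v u * ux / (v u)\<^sup>2"

definition closed_loop_solution ::
  "('a::euclidean_space \<Rightarrow> real \<Rightarrow> 'a) \<Rightarrow> (real \<Rightarrow> real) \<Rightarrow> ('a \<Rightarrow> real) \<Rightarrow>
   (real \<Rightarrow> 'a) \<Rightarrow> (real \<Rightarrow> real \<Rightarrow> real) \<Rightarrow> (real \<Rightarrow> real \<Rightarrow> real) \<Rightarrow> (real \<Rightarrow> real \<Rightarrow> real) \<Rightarrow>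
   (real \<Rightarrow> real \<Rightarrow> 'a) \<Rightarrow> bool" where
  "closed_loop_solution f v \<kappa> X u ux ut p \<longleftrightarrow>
     (\<forall>t\<ge>0. (X has_vector_derivative f (X t) (u 0 t)) (at t within {0..})) \<and>
     continuous_on ({0..1} \<times> {0..}) (\<lambda>z. ux (fst z) (snd z)) \<and>
     continuous_on ({0..1} \<times> {0..}) (\<lambda>z. ut (fst z) (snd z)) \<and>
     (\<forall>x\<in>{0..1}. \<forall>t\<ge>0. ((\<lambda>z. u (fst z) (snd z)) has_derivative
          (\<lambda>h. ux x t * fst h + ut x t * snd h)) (at (x, t) within {0..1} \<times> {0..})) \<and>
     (\<forall>x\<in>{0..1}. \<forall>t\<ge>0. ut x t = v (u x t) * ux x t) \<and>
     (\<forall>t\<ge>0. u 1 t = \<kappa> (p 1 t)) \<and>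
     (\<forall>x\<in>{0..1}. \<forall>t\<ge>0.
        ((\<lambda>y. Gamma v (u y t) (ux y t) y *\<^sub>R f (p y t) (u y t)) has_integral (p x t - X t)) {0..x})"

end

theory Submission
  imports Defs
begin


lemma Kinf_majorant:
  fixes m :: "real \<Rightarrow> real"
  assumes mono: "mono_on {0..} m" and nn: "\<And>s. s \<ge> 0 \<Longrightarrow> m s \<ge> 0"
    and lim0: "\<And>e. e > 0 \<Longrightarrow> \<exists>d>0. \<forall>s. 0 < s \<and> s < d \<longrightarrow> m s < e"
  shows "\<exists>rh. class_Kinf rh \<and> (\<forall>s\<ge>0. m s \<le> rh s)"
proof -
  define Ig where "Ig x = integral {0..x} m" for x
  define rh where "rh s = (if s \<le> 0 then s else s + Ig (2 * s) / s)" for s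
  have int: "m integrable_on {a..b}" if "0 \<le> a" for a b
    by (rule integrable_on_mono_on, rule mono_on_subset[OF mono]) (use that in auto)
  have Ige: "Ig x \<ge> 0" if "x \<ge> 0" for x
    unfolding Ig_def by (rule integral_nonneg[OF int]) (auto intro: nn)
  have Ile: "Ig x \<le> x * m x" if "x \<ge> 0" for x
  proof -
    have "Ig x \<le> integral {0..x} (\<lambda>_. m x)"
      unfolding Ig_def by (rule integral_le[OF int]) (use that in \<open>auto intro!: mono_onD[OF mono]\<close>)
    also have "\<dots> = x * m x" using that by simp
    finally show ?thesis .
  qed
  have split: "Ig b = Ig a + integral {a..b} m" if "0 \<le> a" "a \<le> b" for a b
    unfolding Ig_def using Henstock_Kurzweil_Integration.integral_combine[OF that int[of 0 b]] by simp
  have mid: "integral {a..b} m \<ge> (b - a) * m a" if "0 \<le> a" "a \<le> b" for a b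
  proof -
    have "integral {a..b} (\<lambda>_. m a) \<le> integral {a..b} m"
      by (rule integral_le[OF _ int]) (use that in \<open>auto intro!: mono_onD[OF mono]\<close>)
    then show ?thesis using that by simp
  qed
  have mle: "m s \<le> Ig (2 * s) / s" if "s > 0" for s
  proof -
    have "Ig (2 * s) \<ge> s * m s" using split[of s "2 * s"] mid[of s "2 * s"] Ige[of s] that by auto
    then show ?thesis using that by (simp add: field_simps)
  qed
  have avg: "Ig a / a \<le> Ig b / b" if "0 < a" "a \<le> b" for a b
  proof -
    have "b * Ig a = a * Ig a + (b - a) * Ig a" by algebra
    also have "(b - a) * Ig a \<le> (b - a) * (a * m a)"
      using Ile[of a] that by (intro mult_left_mono) auto
    also have "(b - a) * (a * m a) \<le> a * integral {a..b} m"
      using mult_left_mono[OF mid[of a b], of a] that by (simp add: algebra_simps)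
    finally have "b * Ig a \<le> a * Ig b" using split[of a b] that by (simp add: algebra_simps)
    then show ?thesis using that by (simp add: field_simps)
  qed
  have small: "Ig (2 * s) / s \<le> 2 * m (2 * s)" if "s > 0" for s
    using Ile[of "2 * s"] that by (simp add: field_simps)
  have r0: "rh 0 = 0" by (simp add: rh_def)
  have rge: "s \<le> rh s" if "s \<ge> 0" for s
    using Ige[of "2 * s"] that by (auto simp: rh_def)
  have smono: "strict_mono_on {0..} rh"
  proof (rule strict_mono_onI)
    fix a b :: real assume ab: "a \<in> {0..}" "b \<in> {0..}" "a < b"
    show "rh a < rh b"
    proof (cases "a = 0")
      case True
      have "Ig (2 * b) / b \<ge> 0" using ab Ige[of "2 * b"] by simp
      then show ?thesis using ab True by (auto simp: rh_def)
    next
      case False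
      then have "a > 0" using ab by auto
      have "Ig (2 * a) / (2 * a) \<le> Ig (2 * b) / (2 * b)" using avg[of "2 * a" "2 * b"] \<open>a>0\<close> ab by auto
      then have "Ig (2 * a) / a / 2 \<le> Ig (2 * b) / b / 2" by (simp add: divide_divide_eq_left mult.commute)
      then have "Ig (2 * a) / a \<le> Ig (2 * b) / b" by (simp add: divide_right_mono_neg field_simps)
      then show ?thesis using ab \<open>a>0\<close> by (auto simp: rh_def)
    qed
  qed
  have cont: "continuous_on {0..} rh"
    unfolding continuous_on_eq_continuous_within
  proof
    fix x :: real assume x: "x \<in> {0..}"
    show "continuous (at x within {0..}) rh"
    proof (cases "x = 0")
      case True
      show ?thesis unfolding True continuous_within_eps_delta
      proof (intro allI impI)
        fix e :: real assume e: "e > 0"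
        obtain d where d: "d > 0" "\<forall>s. 0 < s \<and> s < d \<longrightarrow> m s < e/4" using lim0[of "e/4"] e by auto
        show "\<exists>d>0. \<forall>x'\<in>{0..}. dist x' 0 < d \<longrightarrow> dist (rh x') (rh 0) < e"
        proof (intro exI[of _ "min (e/2) (d/2)"] conjI ballI impI)
          show "min (e/2) (d/2) > 0" using e d by auto
          fix s :: real assume s: "s \<in> {0..}" "dist s 0 < min (e/2) (d/2)"
          show "dist (rh s) (rh 0) < e"
          proof (cases "s = 0")
            case True then show ?thesis using e by simp
          next
            case False
            then have sp: "s > 0" using s by auto
            have "m (2 * s) < e/4" using d s sp by auto
            then have "Ig (2 * s) / s < e/2" using small[OF sp] by linarith
            moreover have "Ig (2 * s) / s \<ge> 0" using Ige[of "2 * s"] sp by simp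
            moreover have "rh s = s + Ig (2 * s) / s" using sp by (simp add: rh_def)
            moreover have "s < e/2" using s by simp
            ultimately have "dist (rh s) (rh 0) = rh s" using sp by (simp add: r0 dist_real_def)
            with \<open>rh s = s + Ig (2 * s) / s\<close> \<open>s < e/2\<close> \<open>Ig (2 * s) / s < e/2\<close> show ?thesis by linarith
          qed
        qed
      qed
    next
      case False
      then have xp: "x > 0" using x by auto
      have cI: "continuous_on {0..2 * x+2} Ig"
        unfolding Ig_def by (rule indefinite_integral_continuous_1[OF int]) simp
      have "continuous_on {0<..<x+1} (\<lambda>s. s + Ig (2 * s) / s)"
        apply (intro continuous_intros)
         apply (rule continuous_on_compose2[OF cI])
          apply (auto intro!: continuous_intros)
        done
      then have "continuous_on {0<..<x+1} rh"
        by (rule continuous_on_eq) (auto simp: rh_def)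
      then have "isCont rh x"
        by (rule continuous_on_interior) (use xp in \<open>auto simp: interior_open\<close>)
      then show ?thesis by (rule continuous_at_imp_continuous_at_within)
    qed
  qed
  have lim: "filterlim rh at_top at_top"
    by (rule filterlim_at_top_mono[OF filterlim_ident]) (auto intro: rge simp: eventually_at_top_linorder)
  have "class_Kinf rh" unfolding class_Kinf_def class_K_def using cont r0 smono lim by auto
  moreover have "\<forall>s\<ge>0. m s \<le> rh s"
  proof (intro allI impI)
    fix s :: real assume s: "s \<ge> 0"
    show "m s \<le> rh s"
    proof (cases "s = 0")
      case True
      have "m 0 \<le> 0"
      proof (rule ccontr)
        assume "\<not> m 0 \<le> 0"
        then obtain d where d: "d > 0" "\<forall>s. 0 < s \<and> s < d \<longrightarrow> m s < m 0" using lim0[of "m 0"] by auto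
        have "m 0 \<le> m (d/2)" using d by (intro mono_onD[OF mono]) auto
        moreover have "m (d/2) < m 0" using d(2)[rule_format, of "d/2"] d(1) by simp
        ultimately show False by simp
      qed
      then show ?thesis using True r0 by simp
    next
      case False
      then have "s > 0" using s by auto
      then show ?thesis using mle[of s] Ige[of "2 * s"] by (auto simp: rh_def)
    qed
  qed
  ultimately show ?thesis by blast
qed



lemma Gamma_bounds:
  fixes v :: "real \<Rightarrow> real"
  assumes va: "v a \<ge> vlow" "vlow > 0" and r: "-M < deriv v a * b / v a" "deriv v a * b / v a < 1"
    and y: "0 \<le> y" "y \<le> 1" and M: "M > 0"
  shows "0 < Gamma v a b y \<and> Gamma v a b y \<le> (1+M)/vlow"
proof -
  define r where "r = deriv v a * b / v a"
  have vp: "v a > 0" using va by linarith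
  have eq: "Gamma v a b y = (1 - y * r) / v a"
    using vp by (simp add: Gamma_def r_def field_simps power2_eq_square)
  have pos: "0 < 1 - y * r"
  proof (cases "r \<le> 0")
    case True then have "y * r \<le> 0" using y by (simp add: mult_nonneg_nonpos)
    then show ?thesis by linarith
  next
    case False then have "y * r \<le> 1 * r" using y by (intro mult_right_mono) auto
    then show ?thesis using r unfolding r_def by linarith
  qed
  have up: "1 - y * r \<le> 1 + M"
  proof -
    have "y * (-M) \<le> y * r" using y r unfolding r_def by (intro mult_left_mono) auto
    moreover have "y * (-M) \<ge> -M" using y M by (simp add: mult_le_cancel_right1 mult_left_le_one_le)
    ultimately show ?thesis by linarith
  qed
  have "(1 - y * r) / v a \<le> (1 + M) / v a" using up vp by (intro divide_right_mono) auto
  also have "\<dots> \<le> (1 + M) / vlow" using va M by (intro divide_left_mono) auto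
  finally show ?thesis using eq pos vp by simp
qed

lemma estimate:
  fixes f :: "real^'n \<Rightarrow> real \<Rightarrow> real^'n" and v dv :: "real \<Rightarrow> real"
    and R :: "real^'n \<Rightarrow> real" and DR :: "real^'n \<Rightarrow> real^'n \<Rightarrow> real"
    and X :: "real \<Rightarrow> real^'n" and p :: "real \<Rightarrow> real \<Rightarrow> real^'n"
  assumes Fc: "continuous_on UNIV (\<lambda>z. f (fst z) (snd z))"
    and dv: "\<And>s. (v has_real_derivative dv s) (at s)" and dvc: "continuous_on UNIV dv"
    and vl: "vlow > 0" "\<And>s. v s \<ge> vlow" and M: "M > 0"
    and DR: "\<And>z. (R has_derivative DR z) (at z)"
    and Rf: "\<And>z w. DR z (f z w) \<le> R z + \<alpha>3 \<bar>w\<bar>"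
    and Rle: "\<And>z. R z \<le> \<alpha>2 (norm z)" and Rnn: "\<And>z. R z \<ge> 0"
    and a2: "mono_on {0..} \<alpha>2" and a3: "mono_on {0..} \<alpha>3" "\<And>r. r \<ge> 0 \<Longrightarrow> \<alpha>3 r \<ge> 0"
    and a2n: "\<And>r. r \<ge> 0 \<Longrightarrow> \<alpha>2 r \<ge> 0"
    and sol: "closed_loop_solution f v \<kappa> X u ux ut p"
    and bnd: "\<forall>x\<in>{0..1}. \<forall>t\<ge>0. - M < deriv v (u x t) * ux x t / v (u x t) \<and>
                             deriv v (u x t) * ux x t / v (u x t) < 1"
    and t: "t \<ge> 0"
    and s: "s = norm (X t) + (SUP x\<in>{0..1}. \<bar>u x t\<bar>)"
    and y: "y \<in> {0..1}"
  shows "R (p y t) \<le> exp ((1+M)/vlow) * (\<alpha>2 s + \<alpha>3 s) \<and> \<bar>u y t\<bar> \<le> s \<and>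
     (\<exists>G. 0 < G \<and> G \<le> (1+M)/vlow \<and>
        vector_derivative (\<lambda>y. p y t) (at y within {0..1}) = G *\<^sub>R f (p y t) (u y t))"
proof -
  define C where "C = (1+M)/vlow"
  have Cp: "C > 0" using M vl unfolding C_def by auto
  define U where "U y = u y t" for y
  define UX where "UX y = ux y t" for y
  define P where "P y = p y t" for y
  define G where "G y = Gamma v (U y) (UX y) y" for y
  define g where "g y = G y *\<^sub>R f (P y) (U y)" for y
  have dveq: "deriv v = dv" by (rule ext, rule DERIV_imp_deriv[OF dv])
  have vpos: "v z > 0" for z using vl(1) vl(2)[of z] by linarith
  have vne: "v z \<noteq> 0" for z using vpos[of z] by simp
  note sol' = sol[unfolded closed_loop_solution_def]
  have hi: "(g has_integral (P x - X t)) {0..x}" if "x \<in> {0..1}" for x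
    using sol' that t unfolding g_def G_def P_def U_def UX_def by auto
  have gint: "g integrable_on {0..1}" using hi[of 1] by auto
  have Peq: "P x = X t + integral {0..x} g" if "x \<in> {0..1}" for x
    using integral_unique[OF hi[OF that]] by simp
  have Pc: "continuous_on {0..1} P"
    by (rule continuous_on_eq[OF continuous_on_add[OF continuous_on_const indefinite_integral_continuous_1[OF gint]]])
       (simp add: Peq)
  have uc2: "continuous_on ({0..1} \<times> {0..}) (\<lambda>z. u (fst z) (snd z))"
    unfolding continuous_on_eq_continuous_within
  proof
    fix z :: "real \<times> real" assume z: "z \<in> {0..1} \<times> {0..}"
    have hd: "\<forall>x\<in>{0..1}. \<forall>t\<ge>0. ((\<lambda>z. u (fst z) (snd z)) has_derivative
          (\<lambda>h. ux x t * fst h + ut x t * snd h)) (at (x, t) within {0..1} \<times> {0..})"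
      using sol' by blast
    have "((\<lambda>z. u (fst z) (snd z)) has_derivative
          (\<lambda>h. ux (fst z) (snd z) * fst h + ut (fst z) (snd z) * snd h)) (at z within {0..1} \<times> {0..})"
      using hd[rule_format, of "fst z" "snd z"] z by (simp add: mem_Times_iff)
    then show "continuous (at z within {0..1} \<times> {0..}) (\<lambda>z. u (fst z) (snd z))"
      using has_derivative_continuous by fastforce
  qed
  have tsub: "(\<lambda>y. (y, t)) ` {0..1} \<subseteq> {0..1} \<times> {0..}" using t by auto
  have tc: "continuous_on {0..1} (\<lambda>y::real. (y, t))" by (intro continuous_intros)
  have Uc: "continuous_on {0..1} U"
    using continuous_on_compose2[OF uc2 tc tsub] unfolding U_def
    by (auto intro!: continuous_intros)
  have UXc: "continuous_on {0..1} UX"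
    using continuous_on_compose2[OF conjunct1[OF conjunct2[OF sol']] tc tsub] unfolding UX_def
    by (auto intro!: continuous_intros)
  have vc: "continuous_on UNIV v"
    using dv by (intro continuous_at_imp_continuous_on) (auto intro: DERIV_isCont)
  have vU: "continuous_on {0..1} (\<lambda>y. v (U y))"
    by (rule continuous_on_compose2[OF vc Uc]) auto
  have dvU: "continuous_on {0..1} (\<lambda>y. dv (U y))"
    by (rule continuous_on_compose2[OF dvc Uc]) auto
  have fc: "continuous_on {0..1} (\<lambda>y. f (P y) (U y))"
    using continuous_on_compose2[OF Fc _ subset_UNIV, of "{0..1}" "\<lambda>y. (P y, U y)"]
    by (auto intro!: continuous_intros Pc Uc)
  have Gc: "continuous_on {0..1} G"
    unfolding G_def Gamma_def dveq
    using vne by (auto intro!: continuous_intros vU dvU UXc)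
  have gc: "continuous_on {0..1} g"
    unfolding g_def by (intro continuous_intros Gc fc)
  have Pder: "(P has_vector_derivative g x) (at x within {0..1})" if x: "x \<in> {0..1}" for x
    by (rule has_vector_derivative_transform[OF x Peq])
       (use has_vector_derivative_add[OF has_vector_derivative_const integral_has_vector_derivative[OF gc x]] in simp_all)
  have Gb: "0 < G x \<and> G x \<le> C" if x: "x \<in> {0..1}" for x
    unfolding G_def C_def U_def UX_def
    by (rule Gamma_bounds[where vlow=vlow and M=M and v=v and a="u x t", OF vl(2)[of "u x t"] vl(1) _ _ _ _ M]) (use bnd x t in auto)
  have bddU: "bdd_above ((\<lambda>x. \<bar>u x t\<bar>) ` {0..1})"
  proof -
    have "compact ((\<lambda>x. \<bar>U x\<bar>) ` {0..1})"
      by (rule compact_continuous_image) (auto intro!: continuous_intros Uc)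
    then show ?thesis unfolding U_def by (intro bounded_imp_bdd_above compact_imp_bounded)
  qed
  have Ub: "\<bar>U x\<bar> \<le> s" if x: "x \<in> {0..1}" for x
  proof -
    have "\<bar>u x t\<bar> \<le> (SUP x\<in>{0..1}. \<bar>u x t\<bar>)" by (rule cSUP_upper[OF x bddU])
    then show ?thesis unfolding s U_def using norm_ge_zero[of "X t"] by linarith
  qed
  have sge: "s \<ge> 0" using Ub[of 0] by simp
  have sup0: "\<bar>u 0 t\<bar> \<le> (SUP x\<in>{0..1}. \<bar>u x t\<bar>)" by (rule cSUP_upper[OF _ bddU]) simp
  have Xs: "norm (X t) \<le> s" using sup0 s abs_ge_zero[of "u 0 t"] by linarith
  \<comment> \<open>Gronwall\<close>
  define \<phi> where "\<phi> y = R (P y)" for y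
  define d\<phi> where "d\<phi> y = DR (P y) (g y)" for y
  have lin: "bounded_linear (DR z)" for z using DR[of z] has_derivative_bounded_linear by blast
  have phider: "(\<phi> has_real_derivative d\<phi> x) (at x within {0..1})" if x: "x \<in> {0..1}" for x
  proof -
    have "((\<lambda>y. R (P y)) has_derivative (\<lambda>h. DR (P x) (h *\<^sub>R g x))) (at x within {0..1})"
      using has_derivative_in_compose[OF Pder[OF x, unfolded has_vector_derivative_def]
          has_derivative_at_withinI[OF DR[of "P x"]]] by simp
    moreover have "(\<lambda>h. DR (P x) (h *\<^sub>R g x)) = (\<lambda>h. h * d\<phi> x)"
      using linear_simps(5)[OF lin] by (auto simp: d\<phi>_def)
    moreover have "(\<lambda>h. h * d\<phi> x) = (*) (d\<phi> x)" by (auto simp: mult.commute)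
    ultimately show ?thesis unfolding has_field_derivative_def \<phi>_def by simp
  qed
  have dphi: "d\<phi> x \<le> C * (\<phi> x + \<alpha>3 s)" if x: "x \<in> {0..1}" for x
  proof -
    have "d\<phi> x = G x * DR (P x) (f (P x) (U x))"
      unfolding d\<phi>_def g_def using linear_simps(5)[OF lin] by simp
    also have "\<dots> \<le> G x * (\<phi> x + \<alpha>3 \<bar>U x\<bar>)"
      using Gb[OF x] Rf unfolding \<phi>_def by (intro mult_left_mono) auto
    also have "\<dots> \<le> C * (\<phi> x + \<alpha>3 \<bar>U x\<bar>)"
      using Gb[OF x] Rnn a3(2)[of "\<bar>U x\<bar>"] unfolding \<phi>_def by (intro mult_right_mono) auto
    also have "\<dots> \<le> C * (\<phi> x + \<alpha>3 s)"
      using Cp Ub[OF x] mono_onD[OF a3(1), of "\<bar>U x\<bar>" s] sge by (intro mult_left_mono) auto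
    finally show ?thesis .
  qed
  define \<psi> where "\<psi> y = exp (-(C*y)) * (\<phi> y + \<alpha>3 s)" for y
  define d\<psi> where "d\<psi> y = exp (-(C*y)) * (d\<phi> y - C * (\<phi> y + \<alpha>3 s))" for y
  have psider: "(\<psi> has_real_derivative d\<psi> x) (at x within {0..1})" if x: "x \<in> {0..1}" for x
  proof -
    have "(\<psi> has_real_derivative exp (-(C*x)) * (- C) * (\<phi> x + \<alpha>3 s) + exp (-(C*x)) * d\<phi> x) (at x within {0..1})"
      unfolding \<psi>_def
      by (auto intro!: derivative_eq_intros phider[OF x])
    then show ?thesis unfolding d\<psi>_def by (simp add: algebra_simps)
  qed
  have psile: "\<psi> y \<le> \<psi> 0"
  proof -
    have "\<exists>x\<in>{0..y}. \<psi> y - \<psi> 0 = (*) (d\<psi> x) (y - 0)"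
    proof (rule mvt_very_simple)
      show "0 \<le> y" using y by simp
      fix x assume "0 \<le> x" "x \<le> y"
      then have x: "x \<in> {0..1}" using y by auto
      show "(\<psi> has_derivative (*) (d\<psi> x)) (at x within {0..y})"
        using has_derivative_subset[OF psider[OF x, unfolded has_field_derivative_def]] y
        by auto
    qed
    then obtain x where x: "x \<in> {0..y}" "\<psi> y - \<psi> 0 = y * d\<psi> x" by (auto simp: mult.commute)
    have x1: "x \<in> {0..1}" using x y by auto
    have "d\<psi> x \<le> 0" unfolding d\<psi>_def using dphi[OF x1]
      by (intro mult_nonneg_nonpos) auto
    then have "y * d\<psi> x \<le> 0" using y by (intro mult_nonneg_nonpos) auto
    then show ?thesis using x by simp
  qed
  have P0: "P 0 = X t"
  proof -
    have "(g has_integral (P 0 - X t)) {0..0}" using hi[of 0] by simp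
    moreover have "(g has_integral 0) {0..0}" using has_integral_refl(2)[of g 0] by simp
    ultimately have "P 0 - X t = 0" by (rule has_integral_unique)
    then show ?thesis by simp
  qed
  have "\<psi> 0 = R (X t) + \<alpha>3 s" unfolding \<psi>_def \<phi>_def P0 by simp
  also have "\<dots> \<le> \<alpha>2 s + \<alpha>3 s" using Rle[of "X t"] mono_onD[OF a2, of "norm (X t)" s] Xs sge by auto
  finally have psi0: "\<psi> 0 \<le> \<alpha>2 s + \<alpha>3 s" .
  have "exp (C*y) * \<psi> y = \<phi> y + \<alpha>3 s" unfolding \<psi>_def
    by (simp add: mult.assoc[symmetric] exp_add[symmetric])
  then have "\<phi> y = exp (C*y) * \<psi> y - \<alpha>3 s" by simp
  also have "\<dots> \<le> exp (C*y) * (\<alpha>2 s + \<alpha>3 s)"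
  proof -
    have "exp (C*y) * \<psi> y \<le> exp (C*y) * (\<alpha>2 s + \<alpha>3 s)"
      by (rule mult_left_mono) (use psile psi0 in auto)
    then show ?thesis using a3(2)[OF sge] by linarith
  qed
  also have "\<dots> \<le> exp C * (\<alpha>2 s + \<alpha>3 s)"
    using a3(2)[OF sge] a2n[OF sge] Cp y by (intro mult_right_mono) (auto simp: mult_le_cancel_left1)
  finally have Rb: "R (p y t) \<le> exp C * (\<alpha>2 s + \<alpha>3 s)" unfolding \<phi>_def P_def .
  have vd: "vector_derivative (\<lambda>y. p y t) (at y within {0..1}) = G y *\<^sub>R f (p y t) (u y t)"
    using vector_derivative_within_closed_interval[of 0 1 y P "g y"] Pder[OF y] y
    unfolding g_def P_def U_def by simp
  show ?thesis using Rb Ub[OF y] Gb[OF y] vd unfolding C_def U_def by blast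
qed



lemma classK_facts:
  assumes "class_K \<alpha>"
  shows "mono_on {0..} \<alpha>" "\<And>r. r \<ge> 0 \<Longrightarrow> \<alpha> r \<ge> 0" "continuous_on {0..} \<alpha>" "\<alpha> 0 = 0"
    "\<And>r. r > 0 \<Longrightarrow> \<alpha> r > 0"
proof -
  show m: "mono_on {0..} \<alpha>" using assms unfolding class_K_def by (auto intro: strict_mono_on_imp_mono_on)
  show z: "\<alpha> 0 = 0" using assms unfolding class_K_def by auto
  show "\<And>r. r \<ge> 0 \<Longrightarrow> \<alpha> r \<ge> 0" using mono_onD[OF m, of 0] z by auto
  show "continuous_on {0..} \<alpha>" using assms unfolding class_K_def by auto
  show "\<And>r. r > 0 \<Longrightarrow> \<alpha> r > 0" using assms z unfolding class_K_def
    by (metis atLeast_iff less_eq_real_def strict_mono_onD)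
qed

lemma C1_cont:
  assumes "C1_fun g" shows "continuous_on UNIV g"
proof -
  obtain g' where "\<forall>x. (g has_derivative blinfun_apply (g' x)) (at x)"
    using assms unfolding C1_fun_def by blast
  then show ?thesis
    by (intro continuous_at_imp_continuous_on) (auto intro: has_derivative_continuous)
qed

theorem lemma3:
  fixes f :: "real^'n \<Rightarrow> real \<Rightarrow> real^'n" and v :: "real \<Rightarrow> real"
    and \<kappa> :: "real^'n \<Rightarrow> real" and vlow M :: real
  assumes f_C1: "C1_fun (\<lambda>z. f (fst z) (snd z))" and f0: "f 0 0 = 0"
    and A1: "C2_fun v" "vlow > 0" "\<forall>s. v s \<ge> vlow"
    and A2: "\<exists>R \<alpha>1 \<alpha>2 \<alpha>3. smooth_fun R \<and> (\<forall>X. R X \<ge> 0) \<and>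
               class_Kinf \<alpha>1 \<and> class_Kinf \<alpha>2 \<and> class_Kinf \<alpha>3 \<and>
               (\<forall>X. \<alpha>1 (norm X) \<le> R X \<and> R X \<le> \<alpha>2 (norm X)) \<and>
               (\<forall>X w. frechet_derivative R (at X) (f X w) \<le> R X + \<alpha>3 \<bar>w\<bar>)"
    and A3: "C2_fun \<kappa>" "\<kappa> 0 = 0" "ISS (\<lambda>X w. f X (\<kappa> X + w))"
    and M: "M > 0"
  shows "\<exists>\<rho>1. class_Kinf \<rho>1 \<and>
    (\<forall>X u ux ut p. closed_loop_solution f v \<kappa> X u ux ut p \<and>
       (\<forall>x\<in>{0..1}. \<forall>t\<ge>0. - M < deriv v (u x t) * ux x t / v (u x t) \<and>
                             deriv v (u x t) * ux x t / v (u x t) < 1)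
     \<longrightarrow> (\<forall>t\<ge>0. (SUP x\<in>{0..1}. norm (p x t))
                  + (SUP x\<in>{0..1}. norm (vector_derivative (\<lambda>y. p y t) (at x within {0..1})))
                 \<le> \<rho>1 (norm (X t) + (SUP x\<in>{0..1}. \<bar>u x t\<bar>))))"
proof -
  define F where "F z = f (fst z) (snd z)" for z
  have Fc: "continuous_on UNIV (\<lambda>z. f (fst z) (snd z))" by (rule C1_cont[OF f_C1])
  obtain v' where v': "\<forall>x. (v has_derivative blinfun_apply (v' x)) (at x)" "C1_fun v'"
    using A1(1) unfolding C2_fun_def by blast
  define dv where "dv x = blinfun_apply (v' x) 1" for x
  have dv: "(v has_real_derivative dv x) (at x)" for x
  proof -
    have "blinfun_apply (v' x) = (*) (dv x)"
    proof
      fix h :: real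
      have "blinfun_apply (v' x) h = blinfun_apply (v' x) (h *\<^sub>R 1)" by simp
      also have "\<dots> = h * dv x" unfolding blinfun.scaleR_right dv_def by simp
      finally show "blinfun_apply (v' x) h = dv x * h" by simp
    qed
    then show ?thesis using v'(1) unfolding has_field_derivative_def by metis
  qed
  have dvc: "continuous_on UNIV dv"
  proof -
    have "continuous_on UNIV v'" by (rule C1_cont[OF v'(2)])
    from continuous_on_blinfun_matrix[OF this, of 1 1] show ?thesis unfolding dv_def by simp
  qed
  obtain R \<alpha>1 \<alpha>2 \<alpha>3 where Rs: "smooth_fun R" and Rnn: "\<forall>X. R X \<ge> 0"
    and K1: "class_Kinf \<alpha>1" and K2: "class_Kinf \<alpha>2" and K3: "class_Kinf \<alpha>3"
    and Rb: "\<forall>X. \<alpha>1 (norm X) \<le> R X \<and> R X \<le> \<alpha>2 (norm X)"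
    and Rfd: "\<forall>X w. frechet_derivative R (at X) (f X w) \<le> R X + \<alpha>3 \<bar>w\<bar>"
    using A2 by blast
  obtain DR where DR: "\<And>z. (R has_derivative DR z) (at z)"
    using Rs unfolding smooth_fun_def by metis
  have Rle: "R z \<le> \<alpha>2 (norm z)" for z using Rb by blast
  have Rnn': "R z \<ge> 0" for z using Rnn by blast
  have Rf: "DR z (f z w) \<le> R z + \<alpha>3 \<bar>w\<bar>" for z w
    using Rfd frechet_derivative_at[OF DR[of z]] by metis
  note k1 = classK_facts[OF K1[unfolded class_Kinf_def, THEN conjunct1]]
  note k2 = classK_facts[OF K2[unfolded class_Kinf_def, THEN conjunct1]]
  note k3 = classK_facts[OF K3[unfolded class_Kinf_def, THEN conjunct1]]
  define C where "C = (1+M)/vlow"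
  have Cp: "C > 0" using M A1 unfolding C_def by auto
  define A where "A s = exp C * (\<alpha>2 s + \<alpha>3 s)" for s
  have Anonneg: "A s \<ge> 0" if "s \<ge> 0" for s unfolding A_def using k2(2) k3(2) that by auto
  have Amono: "A s \<le> A s'" if "0 \<le> s" "s \<le> s'" for s s'
    unfolding A_def using mono_onD[OF k2(1), of s s'] mono_onD[OF k3(1), of s s'] that by auto
  have A0: "A 0 = 0" unfolding A_def using k2(4) k3(4) by simp
  have Ac: "continuous_on {0..} A" unfolding A_def by (intro continuous_intros k2(3) k3(3))
  define S1 where "S1 s = {r. 0 \<le> r \<and> \<alpha>1 r \<le> A s}" for s
  define m1 where "m1 s = Sup (S1 s)" for s
  have S1ne: "0 \<in> S1 s" if "s \<ge> 0" for s unfolding S1_def using k1(4) Anonneg[OF that] by simp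
  have S1bdd: "bdd_above (S1 s)" for s
  proof -
    have "\<forall>\<^sub>F r in at_top. A s + 1 \<le> \<alpha>1 r"
      using K1 unfolding class_Kinf_def filterlim_at_top by blast
    then obtain N where N: "\<And>r. r \<ge> N \<Longrightarrow> A s + 1 \<le> \<alpha>1 r" unfolding eventually_at_top_linorder by blast
    have "r \<le> max N 0" if "r \<in> S1 s" for r
    proof (rule ccontr)
      assume "\<not> r \<le> max N 0"
      then have "A s + 1 \<le> \<alpha>1 r" using N by auto
      then show False using that unfolding S1_def by auto
    qed
    then show ?thesis by (meson bdd_aboveI)
  qed
  have m1ge: "r \<le> m1 s" if "0 \<le> r" "\<alpha>1 r \<le> A s" for r s
    unfolding m1_def by (rule cSup_upper[OF _ S1bdd]) (use that in \<open>auto simp: S1_def\<close>)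
  have m1nn: "m1 s \<ge> 0" if "s \<ge> 0" for s using m1ge[of 0 s] k1(4) Anonneg[OF that] by simp
  have m1mono: "m1 s \<le> m1 s'" if "0 \<le> s" "s \<le> s'" for s s'
    unfolding m1_def
    by (rule cSup_subset_mono) (use S1ne[OF that(1)] S1bdd Amono[OF that] in \<open>auto simp: S1_def\<close>)
  have m1lim: "\<exists>d>0. \<forall>s. 0 < s \<and> s < d \<longrightarrow> m1 s < e" if e: "e > 0" for e
  proof -
    have a1p: "\<alpha>1 (e/2) > 0" using k1(5) e by simp
    have "continuous (at 0 within {0..}) A" using Ac by (simp add: continuous_on_eq_continuous_within)
    then obtain d where d: "d > 0" "\<forall>s\<in>{0..}. dist s 0 < d \<longrightarrow> dist (A s) (A 0) < \<alpha>1 (e/2)"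
      unfolding continuous_within_eps_delta using a1p by blast
    show ?thesis
    proof (intro exI[of _ d] conjI allI impI)
      show "d > 0" by fact
      fix s :: real assume s: "0 < s \<and> s < d"
      then have As: "A s < \<alpha>1 (e/2)" using d(2) A0 Anonneg[of s] by (auto simp: dist_real_def)
      have "m1 s \<le> e/2" unfolding m1_def
      proof (rule cSup_least)
        show "S1 s \<noteq> {}" using S1ne[of s] s by auto
        fix r assume r: "r \<in> S1 s"
        show "r \<le> e/2"
        proof (rule ccontr)
          assume "\<not> r \<le> e/2"
          then have "\<alpha>1 (e/2) \<le> \<alpha>1 r" using mono_onD[OF k1(1), of "e/2" r] e by auto
          then show False using r As unfolding S1_def by auto
        qed
      qed
      then show "m1 s < e" using e by simp
    qed
  qed
  define B where "B s = cball (0::real^'n) (m1 s) \<times> cball (0::real) s" for s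
  define m2 where "m2 s = Sup ((\<lambda>z. norm (f (fst z) (snd z))) ` B s)" for s
  have Bbdd: "bdd_above ((\<lambda>z. norm (f (fst z) (snd z))) ` B s)" for s
  proof -
    have "compact ((\<lambda>z. norm (f (fst z) (snd z))) ` B s)"
      unfolding B_def
      by (rule compact_continuous_image)
         (auto intro!: continuous_intros compact_Times continuous_on_subset[OF Fc])
    then show ?thesis by (intro bounded_imp_bdd_above compact_imp_bounded)
  qed
  have Bne: "B s \<noteq> {}" if "s \<ge> 0" for s unfolding B_def using m1nn[OF that] that by auto
  have m2ge: "norm (f q w) \<le> m2 s" if "norm q \<le> m1 s" "\<bar>w\<bar> \<le> s" for q w s
    unfolding m2_def by (rule cSup_upper[OF _ Bbdd]) (use that in \<open>force simp: B_def\<close>)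
  have m2nn: "m2 s \<ge> 0" if "s \<ge> 0" for s
    using m2ge[of 0 s 0] m1nn[OF that] that f0 by simp
  have m2mono: "m2 s \<le> m2 s'" if "0 \<le> s" "s \<le> s'" for s s'
    unfolding m2_def
  proof (rule cSup_subset_mono)
    show "(\<lambda>z. norm (f (fst z) (snd z))) ` B s \<noteq> {}" using Bne[OF that(1)] by simp
    show "bdd_above ((\<lambda>z. norm (f (fst z) (snd z))) ` B s')" by (rule Bbdd)
    show "(\<lambda>z. norm (f (fst z) (snd z))) ` B s \<subseteq> (\<lambda>z. norm (f (fst z) (snd z))) ` B s'"
      using m1mono[OF that] that unfolding B_def by (intro image_mono Sigma_mono) auto
  qed
  have m2lim: "\<exists>d>0. \<forall>s. 0 < s \<and> s < d \<longrightarrow> m2 s < e" if e: "e > 0" for e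
  proof -
    have "isCont (\<lambda>z. f (fst z) (snd z)) (0, 0)" using Fc by (simp add: continuous_on_eq_continuous_at)
    then obtain \<delta> where \<delta>: "\<delta> > 0" "\<forall>z. dist z (0,0) < \<delta> \<longrightarrow> dist (f (fst z) (snd z)) (f 0 0) < e/2"
      unfolding continuous_at_eps_delta using e by (metis fst_conv snd_conv half_gt_zero)
    obtain d1 where d1: "d1 > 0" "\<forall>s. 0 < s \<and> s < d1 \<longrightarrow> m1 s < \<delta>/2" using m1lim[of "\<delta>/2"] \<delta> by auto
    show ?thesis
    proof (intro exI[of _ "min d1 (\<delta>/2)"] conjI allI impI)
      show "min d1 (\<delta>/2) > 0" using d1 \<delta> by auto
      fix s :: real assume s: "0 < s \<and> s < min d1 (\<delta>/2)"
      have "m2 s \<le> e/2" unfolding m2_def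
      proof (rule cSup_least)
        show "(\<lambda>z. norm (f (fst z) (snd z))) ` B s \<noteq> {}" using Bne[of s] s by simp
        fix r assume "r \<in> (\<lambda>z. norm (f (fst z) (snd z))) ` B s"
        then obtain z where z: "z \<in> B s" "r = norm (f (fst z) (snd z))" by auto
        have "norm z \<le> norm (fst z) + norm (snd z)" using norm_Pair_le[of "fst z" "snd z"] by simp
        also have "\<dots> < \<delta>" using z(1) d1 s unfolding B_def by (force simp: mem_Times_iff)
        finally have "dist z (0,0) < \<delta>" by (simp add: dist_norm zero_prod_def[symmetric])
        then have "dist (f (fst z) (snd z)) (f 0 0) < e/2" using \<delta>(2) by blast
        then show "r \<le> e/2" using z(2) f0 by (simp add: dist_norm)
      qed
      then show "m2 s < e" using e by simp
    qed
  qed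
  define m where "m s = m1 s + C * m2 s" for s
  have "\<exists>\<rho>. class_Kinf \<rho> \<and> (\<forall>s\<ge>0. m s \<le> \<rho> s)"
  proof (rule Kinf_majorant)
    show "mono_on {0..} m" unfolding m_def
      by (rule mono_onI) (use m1mono m2mono Cp in \<open>auto intro!: add_mono mult_left_mono\<close>)
    show "m s \<ge> 0" if "s \<ge> 0" for s unfolding m_def using m1nn[OF that] m2nn[OF that] Cp by simp
    show "\<exists>d>0. \<forall>s. 0 < s \<and> s < d \<longrightarrow> m s < e" if e: "e > 0" for e
    proof -
      obtain d1 where d1: "d1 > 0" "\<forall>s. 0 < s \<and> s < d1 \<longrightarrow> m1 s < e/2" using m1lim[of "e/2"] e by auto
      obtain d2 where d2: "d2 > 0" "\<forall>s. 0 < s \<and> s < d2 \<longrightarrow> m2 s < e/(2*C)" using m2lim[of "e/(2*C)"] e Cp by auto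
      show ?thesis
      proof (intro exI[of _ "min d1 d2"] conjI allI impI)
        show "min d1 d2 > 0" using d1 d2 by auto
        fix s :: real assume s: "0 < s \<and> s < min d1 d2"
        have "C * m2 s < C * (e/(2*C))" using d2 s Cp by (intro mult_strict_left_mono) auto
        also have "\<dots> = e/2" using Cp by simp
        finally show "m s < e" using d1 s unfolding m_def by auto
      qed
    qed
  qed
  then obtain \<rho> where \<rho>: "class_Kinf \<rho>" "\<forall>s\<ge>0. m s \<le> \<rho> s" by blast
  show ?thesis
  proof (intro exI[of _ \<rho>] conjI allI impI)
    show "class_Kinf \<rho>" by fact
    fix X u ux ut p and t :: real
    assume H: "closed_loop_solution f v \<kappa> X u ux ut p \<and>
       (\<forall>x\<in>{0..1}. \<forall>t\<ge>0. - M < deriv v (u x t) * ux x t / v (u x t) \<and>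
                             deriv v (u x t) * ux x t / v (u x t) < 1)"
      and t: "0 \<le> t"
    have H1: "closed_loop_solution f v \<kappa> X u ux ut p" using H by blast
    have H2: "\<forall>x\<in>{0..1}. \<forall>t\<ge>0. - M < deriv v (u x t) * ux x t / v (u x t) \<and>
                             deriv v (u x t) * ux x t / v (u x t) < 1" using H by blast
    define s where "s = norm (X t) + (SUP x\<in>{0..1}. \<bar>u x t\<bar>)"
    have est: "R (p y t) \<le> exp ((1+M)/vlow) * (\<alpha>2 s + \<alpha>3 s) \<and> \<bar>u y t\<bar> \<le> s \<and>
     (\<exists>G. 0 < G \<and> G \<le> (1+M)/vlow \<and>
        vector_derivative (\<lambda>y. p y t) (at y within {0..1}) = G *\<^sub>R f (p y t) (u y t))"
      if y: "y \<in> {0..1}" for y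
      by (rule estimate[OF Fc dv dvc A1(2) A1(3)[rule_format] M DR Rf Rle Rnn' k2(1) k3(1) k3(2) k2(2) H1 H2 t s_def y])
    have sge: "s \<ge> 0" using est[of 0] by auto
    have pb: "norm (p y t) \<le> m1 s" if y: "y \<in> {0..1}" for y
    proof (rule m1ge)
      show "\<alpha>1 (norm (p y t)) \<le> A s" using est[OF y] Rb unfolding A_def C_def by (meson order_trans)
    qed simp
    have db: "norm (vector_derivative (\<lambda>y. p y t) (at y within {0..1})) \<le> C * m2 s" if y: "y \<in> {0..1}" for y
    proof -
      obtain G where G: "0 < G" "G \<le> C"
        "vector_derivative (\<lambda>y. p y t) (at y within {0..1}) = G *\<^sub>R f (p y t) (u y t)"
        using est[OF y] unfolding C_def by blast
      have "norm (f (p y t) (u y t)) \<le> m2 s" using m2ge pb[OF y] est[OF y] by blast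
      then have "G * norm (f (p y t) (u y t)) \<le> C * m2 s"
        using G by (intro mult_mono) auto
      then show ?thesis using G by simp
    qed
    have "(SUP x\<in>{0..1}. norm (p x t)) \<le> m1 s" by (rule cSUP_least) (auto intro: pb)
    moreover have "(SUP x\<in>{0..1}. norm (vector_derivative (\<lambda>y. p y t) (at x within {0..1}))) \<le> C * m2 s"
      by (rule cSUP_least) (auto intro: db)
    ultimately have "(SUP x\<in>{0..1}. norm (p x t))
                  + (SUP x\<in>{0..1}. norm (vector_derivative (\<lambda>y. p y t) (at x within {0..1}))) \<le> m s"
      unfolding m_def by simp
    also have "\<dots> \<le> \<rho> s" using \<rho>(2) sge by simp
    finally show "(SUP x\<in>{0..1}. norm (p x t))
                  + (SUP x\<in>{0..1}. norm (vector_derivative (\<lambda>y. p y t) (at x within {0..1})))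
                 \<le> \<rho> (norm (X t) + (SUP x\<in>{0..1}. \<bar>u x t\<bar>))" unfolding s_def .
  qed
qed

end
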